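(* Let $\rho\in\mathcal{D}(\mathbb{C}^2)$ be a known nominal qubit state and $\alpha\in(0,1)$. Consider the one-sample quantum universal hypothesis testing problem: given $\sigma^{\otimes m}$ for an unknown $\sigma\in\mathcal{D}(\mathbb{C}^2)$, test $H_0:\sigma=\rho$ against $H_1:\sigma\neq\rho$. Then there exist decision rules $M_m$ (depending only on $\rho$, $\alpha$ and $m$, not on $\sigma$), using only independent measurements, such that for all sufficiently large $m$, $\alpha(M_m)\le\alpha$, and for every fixed $\sigma\neq\rho$ there is a constant $K$ (which may depend on $\rho,\sigma,\alpha$) such that for all sufficiently large $m$, $$\beta(M_m)\le\exp\!\left(-\frac{m\|\rho-\sigma\|_1^2}{54}+K m^{1/2}\right).$$
   Context: $\mathcal{D}(\mathcal{H})$ denotes the set of density operators on $\mathcal{H}$. A decision rule $M_m$ is a two-outcome POVM $\{E_0,E_1\}$ on $\mathcal{H}^{\otimes m}$ (outcome $0$: declare $H_0$; outcome $1$: declare $H_1$). "Independent measurements" means each of the $m$ copies is measured separately and the outcomes are classically processed. Type I error: $\alpha(M_m)=\mathrm{Tr}[\rho^{\otimes m}E_1]$; type II error (for the true state $\sigma$): $\beta(M_m)=\mathrm{Tr}[\sigma^{\otimes m}E_0]$. $\|X\|_1=\mathrm{Tr}\sqrt{X^\dagger X}$ is the trace norm. *)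

theory Defs
  imports "HOL-Analysis.Analysis"
begin

type_synonym qmat = "complex^2^2"

definition adj :: "qmat \<Rightarrow> qmat" where
  "adj A = (\<chi> i j. cnj (A $ j $ i))"

definition psd :: "qmat \<Rightarrow> bool" where
  "psd A \<longleftrightarrow> A = adj A \<and>
     (\<forall>v::complex^2. Im (\<Sum>i\<in>UNIV. cnj (v $ i) * (A *v v) $ i) = 0 \<and>
                      Re (\<Sum>i\<in>UNIV. cnj (v $ i) * (A *v v) $ i) \<ge> 0)"

definition density :: "qmat \<Rightarrow> bool" where
  "density A \<longleftrightarrow> psd A \<and> trace A = 1"

definition msqrt :: "qmat \<Rightarrow> qmat" where
  "msqrt A = (THE S. psd S \<and> S ** S = A)"

definition trace_norm :: "qmat \<Rightarrow> real" where
  "trace_norm X = Re (trace (msqrt (adj X ** X)))"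

text \<open>A decision rule on m copies using independent measurements:
  copy i (i < m) is measured with a finite-outcome POVM F i 0, ..., F i (ks i - 1);
  the outcome string o is classically processed by g (g o = True: declare H1).\<close>
type_synonym indep_rule = "(nat \<Rightarrow> nat) \<times> (nat \<Rightarrow> nat \<Rightarrow> qmat) \<times> ((nat \<Rightarrow> nat) \<Rightarrow> bool)"

definition is_indep_rule :: "nat \<Rightarrow> indep_rule \<Rightarrow> bool" where
  "is_indep_rule m M = (case M of (ks, F, g) \<Rightarrow>
     (\<forall>i<m. (\<forall>k<ks i. psd (F i k)) \<and> (\<Sum>k<ks i. F i k) = mat 1))"

text \<open>Probability (Born rule on the product state s^{\<otimes> m}, product measurement)
  that the rule outputs b.\<close>
definition out_prob :: "qmat \<Rightarrow> nat \<Rightarrow> indep_rule \<Rightarrow> bool \<Rightarrow> real" where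
  "out_prob s m M b = (case M of (ks, F, g) \<Rightarrow>
     (\<Sum>w\<in>{w \<in> PiE {..<m} (\<lambda>i. {..<ks i}). g w = b}.
        \<Prod>i<m. Re (trace (s ** F i (w i)))))"

text \<open>Type I error Tr[rho^{\<otimes> m} E_1] and type II error Tr[sigma^{\<otimes> m} E_0].\<close>
definition type1_err :: "qmat \<Rightarrow> nat \<Rightarrow> indep_rule \<Rightarrow> real" where
  "type1_err \<rho> m M = out_prob \<rho> m M True"

definition type2_err :: "qmat \<Rightarrow> nat \<Rightarrow> indep_rule \<Rightarrow> real" where
  "type2_err \<sigma> m M = out_prob \<sigma> m M False"

end

theory Submission
  imports Defs "HOL-Probability.Probability"
begin


definition outer :: "complex^2 \<Rightarrow> qmat" where
  "outer u = (\<chi> i j. u$i * cnj (u$j))"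

lemma quad_outer:
  "(\<Sum>i\<in>UNIV. cnj (v $ i) * (outer u *v v) $ i) = complex_of_real ((cmod (\<Sum>i\<in>UNIV. cnj (v$i) * u$i))^2)"
proof -
  define z where "z = (\<Sum>i\<in>UNIV. cnj (v$i) * u$i)"
  have "(\<Sum>i\<in>UNIV. cnj (v $ i) * (outer u *v v) $ i) = z * cnj z"
    unfolding z_def outer_def matrix_vector_mult_def sum_2
    by (simp add: algebra_simps)
  also have "\<dots> = complex_of_real ((cmod z)^2)" by (metis complex_norm_square of_real_power)
  finally show ?thesis by (simp add: z_def)
qed

lemma psd_outer: "psd (outer u)"
  unfolding psd_def
proof (intro conjI allI)
  show "outer u = adj (outer u)" by (simp add: outer_def adj_def vec_eq_iff)
qed (simp_all add: quad_outer)



lemmas ent = vec_eq_iff forall_2 matrix_matrix_mult_def sum_2 adj_def mat_def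
  matrix_vector_mult_def trace_def

lemma psd_entries:
  assumes "psd S"
  shows "S$1$1 = complex_of_real (Re (S$1$1))" "S$2$2 = complex_of_real (Re (S$2$2))"
    "S$2$1 = cnj (S$1$2)" "Re (S$1$1) \<ge> 0" "Re (S$2$2) \<ge> 0"
    "\<And>v. Re (\<Sum>i\<in>UNIV. cnj (v $ i) * (S *v v) $ i) \<ge> 0"
proof -
  have h: "S = adj S" and q: "\<And>v. Re (\<Sum>i\<in>UNIV. cnj (v $ i) * (S *v v) $ i) \<ge> 0"
    using assms unfolding psd_def by auto
  from h have e: "S$1$1 = cnj (S$1$1)" "S$2$2 = cnj (S$2$2)" "S$2$1 = cnj (S$1$2)"
    by (metis (no_types) adj_def vec_lambda_beta)+
  show "S$1$1 = complex_of_real (Re (S$1$1))" "S$2$2 = complex_of_real (Re (S$2$2))"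
    using arg_cong[OF e(1), of Im] arg_cong[OF e(2), of Im] by (simp_all add: complex_eq_iff)
  show "S$2$1 = cnj (S$1$2)" by fact
  show "\<And>v. Re (\<Sum>i\<in>UNIV. cnj (v $ i) * (S *v v) $ i) \<ge> 0" by fact
  have "Re (\<Sum>i\<in>UNIV. cnj (((\<chi> i. if i = 1 then 1 else 0)::complex^2) $ i) * (S *v (\<chi> i. if i = 1 then 1 else 0)) $ i) \<ge> 0"
    by (rule q)
  then show "Re (S$1$1) \<ge> 0" by (simp add: ent)
  have "Re (\<Sum>i\<in>UNIV. cnj (((\<chi> i. if i = 1 then 0 else 1)::complex^2) $ i) * (S *v (\<chi> i. if i = 1 then 0 else 1)) $ i) \<ge> 0"
    by (rule q)
  then show "Re (S$2$2) \<ge> 0" by (simp add: ent)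
qed

lemma psd_offdiag:
  assumes "psd S" "S$1$1 = 0" "S$2$2 = 0"
  shows "S$1$2 = 0"
proof -
  define b where "b = S$1$2"
  have "Re (\<Sum>i\<in>UNIV. cnj (((\<chi> i. if i = 1 then 1 else - cnj b)::complex^2) $ i) * (S *v (\<chi> i. if i = 1 then 1 else - cnj b)) $ i) \<ge> 0"
    by (rule psd_entries(6)[OF assms(1)])
  then have "- 2 * (Re b ^ 2 + Im b ^ 2) \<ge> 0"
    using assms psd_entries(3)[OF assms(1)] by (simp add: ent b_def power2_eq_square algebra_simps)
  then have "Re b ^ 2 + Im b ^ 2 = 0"
    by (smt (verit) zero_le_power2)
  then have "Re b = 0" "Im b = 0" by (simp_all add: sum_power2_eq_zero_iff)
  then show ?thesis by (simp add: b_def complex_eq_iff)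
qed

lemma sqrt_scalar_unique:
  assumes S: "psd S" and SS: "S ** S = mat (complex_of_real (c^2))" and c: "c \<ge> 0"
  shows "S = mat (complex_of_real c)"
proof -
  define a where "a = Re (S$1$1)"
  define e where "e = Re (S$2$2)"
  define b where "b = S$1$2"
  have s11: "S$1$1 = complex_of_real a" and s22: "S$2$2 = complex_of_real e"
    and s21: "S$2$1 = cnj b" and a0: "a \<ge> 0" and e0: "e \<ge> 0"
    using psd_entries[OF S] by (simp_all add: a_def e_def b_def)
  have m11: "(S ** S)$1$1 = complex_of_real (c^2)" and m22: "(S ** S)$2$2 = complex_of_real (c^2)"
    and m12: "(S ** S)$1$2 = 0"
    using SS by (simp_all add: mat_def)
  have x11: "(S ** S)$1$1 = S$1$1*S$1$1 + S$1$2*S$2$1"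
   and x22: "(S ** S)$2$2 = S$2$1*S$1$2 + S$2$2*S$2$2"
   and x12: "(S ** S)$1$2 = S$1$1*S$1$2 + S$1$2*S$2$2"
    by (simp_all add: matrix_matrix_mult_def sum_2)
  from m11 have r11: "a^2 + Re b ^2 + Im b^2 = c^2"
    unfolding x11 s11 s21 b_def[symmetric]
    by (simp add: complex_eq_iff power2_eq_square)
  from m22 have r22: "e^2 + Re b ^2 + Im b^2 = c^2"
    unfolding x22 s22 s21 b_def[symmetric]
    by (simp add: complex_eq_iff power2_eq_square)
  from m12 have r12: "(a + e) * Re b = 0" "(a + e) * Im b = 0"
    unfolding x12 s11 s22 b_def[symmetric]
    by (simp_all add: complex_eq_iff algebra_simps)
  have ae: "a = e" using r11 r22 a0 e0
    by (metis add.commute add_right_cancel power2_eq_iff_nonneg)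
  show ?thesis
  proof (cases "a = 0")
    case True
    then have "S$1$1 = 0" "S$2$2 = 0" using ae s11 s22 by auto
    then have "b = 0" using psd_offdiag[OF S] b_def by auto
    then have "c = 0" using r11 True c by simp
    show ?thesis using \<open>b = 0\<close> \<open>c = 0\<close> True ae s11 s22 s21
      by (simp add: vec_eq_iff forall_2 mat_def b_def)
  next
    case False
    then have "a + e \<noteq> 0" using ae a0 by simp
    then have "Re b = 0" "Im b = 0" using r12 by simp_all
    then have "b = 0" by (simp add: complex_eq_iff)
    then have "a^2 = c^2" using r11 by simp
    then have "a = c" using a0 c by (simp add: power2_eq_iff_nonneg)
    show ?thesis using \<open>b = 0\<close> \<open>a = c\<close> ae s11 s22 s21
      by (simp add: vec_eq_iff forall_2 mat_def b_def)
  qed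
qed

lemma psd_scalar: "c \<ge> 0 \<Longrightarrow> psd (mat (complex_of_real c))"
  unfolding psd_def
proof (intro conjI allI)
  fix v :: "complex^2"
  assume c: "c \<ge> 0"
  have eq: "(\<Sum>i\<in>UNIV. cnj (v $ i) * (mat (complex_of_real c) *v v) $ i)
      = complex_of_real (c * ((Re (v$1))^2 + (Im (v$1))^2 + (Re (v$2))^2 + (Im (v$2))^2))"
    by (simp add: ent complex_eq_iff power2_eq_square algebra_simps)
  show "Im (\<Sum>i\<in>UNIV. cnj (v $ i) * (mat (complex_of_real c) *v v) $ i) = 0"
    unfolding eq by simp
  show "Re (\<Sum>i\<in>UNIV. cnj (v $ i) * (mat (complex_of_real c) *v v) $ i) \<ge> 0"
    unfolding eq using c by simp
qed (simp add: ent)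

lemma mat_mult_scalar: "(mat x :: 'a::comm_ring_1^2^2) ** (mat y :: 'a^2^2) = mat (x * y)"
  by (simp add: vec_eq_iff forall_2 matrix_matrix_mult_def sum_2 mat_def)

lemma msqrt_scalar:
  assumes "c \<ge> 0"
  shows "msqrt (mat (complex_of_real (c^2))) = mat (complex_of_real c)"
  unfolding msqrt_def
proof (rule the_equality)
  show "psd (mat (complex_of_real c)) \<and> (mat (complex_of_real c)::qmat) ** (mat (complex_of_real c)::qmat) = mat (complex_of_real (c\<^sup>2))"
    using psd_scalar[OF assms] mat_mult_scalar[of "complex_of_real c" "complex_of_real c"]
    by (simp add: power2_eq_square)
  show "\<And>S. psd S \<and> S ** S = mat (complex_of_real (c\<^sup>2)) \<Longrightarrow> S = mat (complex_of_real c)"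
    using sqrt_scalar_unique assms by blast
qed

lemma trace_norm_diff:
  assumes r: "density \<rho>" and s: "density \<sigma>"
  shows "(trace_norm (\<rho> - \<sigma>))^2 = 4 * ((Re ((\<rho> - \<sigma>)$1$1))^2 + (Re ((\<rho> - \<sigma>)$1$2))^2 + (Im ((\<rho> - \<sigma>)$1$2))^2)"
proof -
  define D where "D = \<rho> - \<sigma>"
  define p where "p = Re (D$1$1)"
  define q where "q = D$1$2"
  define c where "c = sqrt (p^2 + (Re q)^2 + (Im q)^2)"
  have c0: "c \<ge> 0" by (simp add: c_def)
  have cc: "c^2 = p^2 + (Re q)^2 + (Im q)^2" unfolding c_def by simp
  have pr: "psd \<rho>" "trace \<rho> = 1" "psd \<sigma>" "trace \<sigma> = 1"
    using r s unfolding density_def by auto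
  note er = psd_entries[OF pr(1)] and es = psd_entries[OF pr(3)]
  have t: "\<rho>$1$1 + \<rho>$2$2 = 1" "\<sigma>$1$1 + \<sigma>$2$2 = 1"
    using pr(2,4) by (simp_all add: trace_def sum_2)
  have d11: "D$1$1 = complex_of_real p"
    unfolding p_def D_def using er(1) es(1) by (simp add: complex_eq_iff)
  have d22: "D$2$2 = - complex_of_real p"
    using d11 t unfolding D_def by (simp add: complex_eq_iff)
  have d21: "D$2$1 = cnj q"
    unfolding q_def D_def using er(3) es(3) by simp
  have AD: "adj D ** D = mat (complex_of_real (c^2))"
    unfolding cc
    by (simp add: vec_eq_iff forall_2 matrix_matrix_mult_def sum_2 mat_def adj_def d11 d22 d21
        q_def[symmetric] complex_eq_iff power2_eq_square algebra_simps)
  have "trace_norm D = Re (trace (mat (complex_of_real c) :: qmat))"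
    unfolding trace_norm_def AD msqrt_scalar[OF c0] ..
  also have "\<dots> = 2 * c" by (simp add: trace_def sum_2 mat_def)
  finally have "(trace_norm D)^2 = 4 * c^2" by (simp add: power2_eq_square)
  then show ?thesis unfolding cc D_def[symmetric] p_def q_def by simp
qed




definition uv :: "complex \<Rightarrow> complex \<Rightarrow> complex^2" where
  "uv a b = (\<chi> i. if i = 1 then a else b)"

lemma uv_nth [simp]: "uv a b $ 1 = a" "uv a b $ 2 = b"
  by (simp_all add: uv_def)

definition r3 :: complex where "r3 = complex_of_real (sqrt (1/3))"
definition r6 :: complex where "r6 = complex_of_real (sqrt (1/6))"

lemma r3r6 [simp]: "cnj r3 = r3" "cnj r6 = r6" "r3 * r3 = 1/3" "r6 * r6 = 1/6"
  by (simp_all add: r3_def r6_def flip: of_real_mult)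

lemma r3r6' [simp]: "Im r3 = 0" "Im r6 = 0" "Re r3 * Re r3 = 1/3" "Re r6 * Re r6 = 1/6"
  by (simp_all add: r3_def r6_def)

definition uu :: "nat \<Rightarrow> complex^2" where
  "uu k = (if k = 0 then uv r3 0 else if k = 1 then uv 0 r3 else if k = 2 then uv r6 r6
     else if k = 3 then uv r6 (-r6) else if k = 4 then uv r6 (\<i> * r6) else uv r6 (- \<i> * r6))"

definition FF :: "nat \<Rightarrow> qmat" where "FF k = outer (uu k)"

definition qq :: "qmat \<Rightarrow> nat \<Rightarrow> real" where "qq s k = Re (trace (s ** FF k))"

definition hh :: "nat \<Rightarrow> nat \<Rightarrow> real" where
  "hh a k = (if k = 2 * a then 1 else if k = 2 * a + 1 then -1 else 0)"

definition mu :: "qmat \<Rightarrow> nat \<Rightarrow> real" where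
  "mu s a = (\<Sum>k<6. qq s k * hh a k)"

lemma tr_outer: "trace (s ** outer (uv a b)) = cnj a * (s$1$1 * a + s$1$2 * b) + cnj b * (s$2$1 * a + s$2$2 * b)"
  by (simp add: trace_def sum_2 matrix_matrix_mult_def outer_def algebra_simps)

lemma qq_vals:
  "qq s 0 = Re (s$1$1) / 3" "qq s 1 = Re (s$2$2) / 3"
  "qq s 2 = Re (s$1$1 + s$1$2 + s$2$1 + s$2$2) / 6"
  "qq s 3 = Re (s$1$1 - s$1$2 - s$2$1 + s$2$2) / 6"
  "qq s 4 = (Re (s$1$1) - Im (s$1$2) + Im (s$2$1) + Re (s$2$2)) / 6"
  "qq s 5 = (Re (s$1$1) + Im (s$1$2) - Im (s$2$1) + Re (s$2$2)) / 6"
  by (simp_all add: qq_def FF_def uu_def tr_outer algebra_simps, simp_all add: mult.assoc[symmetric])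

lemma mu_vals:
  "mu s 0 = (Re (s$1$1) - Re (s$2$2)) / 3"
  "mu s 1 = (Re (s$1$2) + Re (s$2$1)) / 3"
  "mu s 2 = (Im (s$2$1) - Im (s$1$2)) / 3"
  by (simp_all add: mu_def hh_def lessThan_nat_numeral qq_vals qq_vals(2)[unfolded One_nat_def] field_simps)

lemma qq_sum: "(\<Sum>k<6. qq s k) = Re (trace s)"
  by (simp add: lessThan_nat_numeral qq_vals qq_vals(2)[unfolded One_nat_def] trace_def sum_2 field_simps)

lemma FF_sum: "(\<Sum>k<6. FF k) = mat 1"
  by (simp add: lessThan_nat_numeral FF_def uu_def outer_def vec_eq_iff forall_2 mat_def
     algebra_simps)



definition PP :: "(nat \<Rightarrow> real) \<Rightarrow> nat pmf" where
  "PP f = pmf_of_list (map (\<lambda>k. (k, f k)) [0..<6])"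

lemma PP_pmf:
  assumes "\<And>k. k < 6 \<Longrightarrow> f k \<ge> 0" "(\<Sum>k<6. f k) = 1"
  shows "pmf (PP f) k = (if k < 6 then f k else 0)"
proof -
  have wf: "pmf_of_list_wf (map (\<lambda>k. (k, f k)) [0..<6])"
    using assms(1) assms(2)[unfolded lessThan_nat_numeral] 
    by (auto simp: pmf_of_list_wf_def upt_rec numeral_eq_Suc)
  have eq: "pmf (PP f) k = sum_list (map snd (filter (\<lambda>z. fst z = k) (map (\<lambda>k. (k, f k)) [0..<6])))"
    unfolding PP_def pmf_pmf_of_list[OF wf] ..
  show ?thesis unfolding eq
  proof (cases "k < 6")
    case True
    then have "k \<in> {0,1,2,3,4,5}" by auto
    then show "sum_list (map snd (filter (\<lambda>z. fst z = k) (map (\<lambda>k. (k, f k)) [0..<6]))) = (if k < 6 then f k else 0)" by (auto simp: upt_rec eval_nat_numeral)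
  qed (auto simp: upt_rec)
qed

lemma PP_set:
  assumes "\<And>k. k < 6 \<Longrightarrow> f k \<ge> 0" "(\<Sum>k<6. f k) = 1"
  shows "set_pmf (PP f) \<subseteq> {..<6}"
  using PP_pmf[OF assms] by (auto simp: set_pmf_eq)

lemma prob_PiE:
  fixes m :: nat
  assumes "\<And>k. k < 6 \<Longrightarrow> f k \<ge> 0" "(\<Sum>k<6. f k) = 1"
  shows "measure_pmf.prob (Pi_pmf {..<m} undefined (\<lambda>_. PP f)) {w. G w}
     = (\<Sum>w\<in>{w \<in> PiE {..<m} (\<lambda>i. {..<6}). G w}. \<Prod>i<m. f (w i))"
proof -
  let ?P = "Pi_pmf {..<m} undefined (\<lambda>_. PP f)"
  let ?E = "{w \<in> PiE {..<m} (\<lambda>i. {..<6::nat}). G w}"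
  have sub: "set_pmf ?P \<subseteq> PiE {..<m} (\<lambda>i. {..<6})"
  proof
    fix w assume w: "w \<in> set_pmf ?P"
    have e: "set_pmf ?P = PiE_dflt {..<m} undefined (set_pmf \<circ> (\<lambda>_. PP f))"
      by (rule set_Pi_pmf) simp
    have "w \<in> PiE_dflt {..<m} undefined (set_pmf \<circ> (\<lambda>_. PP f))"
      using w unfolding e .
    then have "\<forall>x<m. w x \<in> set_pmf (PP f)" "\<forall>x. \<not> x < m \<longrightarrow> w x = undefined"
      unfolding PiE_dflt_def by auto
    then show "w \<in> PiE {..<m} (\<lambda>i. {..<6})"
      using PP_set[OF assms] by (auto simp: PiE_iff extensional_def)
  qed
  have "measure_pmf.prob ?P {w. G w} = measure_pmf.prob ?P ({w. G w} \<inter> set_pmf ?P)"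
    by (simp add: measure_Int_set_pmf)
  also have "{w. G w} \<inter> set_pmf ?P = ?E \<inter> set_pmf ?P" using sub by auto
  also have "measure_pmf.prob ?P \<dots> = measure_pmf.prob ?P ?E"
    by (simp add: measure_Int_set_pmf)
  also have "\<dots> = sum (pmf ?P) ?E"
    by (rule measure_measure_pmf_finite) (rule finite_subset[of _ "PiE {..<m} (\<lambda>i. {..<6::nat})"], auto intro: finite_PiE)
  also have "\<dots> = (\<Sum>w\<in>?E. \<Prod>i<m. f (w i))"
  proof (rule sum.cong[OF refl])
    fix w assume w: "w \<in> ?E"
    then have "\<forall>x. x \<notin> {..<m} \<longrightarrow> w x = undefined" by (auto simp: PiE_def extensional_def)
    then show "pmf ?P w = (\<Prod>i<m. f (w i))"
      using w by (auto simp: pmf_Pi PP_pmf[OF assms] intro!: prod.cong)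
  qed
  finally show ?thesis .
qed

lemma hoeff:
  fixes m :: nat and h :: "nat \<Rightarrow> real"
  assumes f0: "\<And>k. k < 6 \<Longrightarrow> f k \<ge> 0" and f1: "(\<Sum>k<6. f k) = 1"
    and hb: "\<And>k. h k \<in> {-1..1}" and m: "m > 0" and e: "\<epsilon> \<ge> 0"
  shows "measure_pmf.prob (Pi_pmf {..<m} undefined (\<lambda>_. PP f))
     {w. \<bar>(\<Sum>i<m. h (w i)) - real m * (\<Sum>k<6. f k * h k)\<bar> \<ge> \<epsilon>} \<le> 2 * exp (-2 * \<epsilon>^2 / (4 * real m))"
proof -
  let ?P = "Pi_pmf {..<m} undefined (\<lambda>_. PP f)"
  interpret H: Hoeffding_ineq "measure_pmf ?P" "{..<m}" "\<lambda>i w. h (w i)" "\<lambda>_. -1" "\<lambda>_. 1"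
     "\<Sum>i<m. measure_pmf.expectation ?P (\<lambda>w. h (w i))"
  proof unfold_locales
    show "prob_space.indep_vars (measure_pmf ?P) (\<lambda>_. borel) (\<lambda>i w. h (w i)) {..<m}"
      by (intro prob_space.indep_vars_compose2[OF _ indep_vars_Pi_pmf])
         (auto simp: measure_pmf.prob_space_axioms)
  qed (use hb in auto)
  have ex: "measure_pmf.expectation ?P (\<lambda>w. h (w i)) = (\<Sum>k<6. f k * h k)" if i: "i < m" for i
  proof -
    have "measure_pmf.expectation ?P (\<lambda>w. h (w i)) = measure_pmf.expectation (map_pmf (\<lambda>w. w i) ?P) h"
      by simp
    also have "map_pmf (\<lambda>w. w i) ?P = PP f"
      using i by (subst Pi_pmf_component) auto
    also have "measure_pmf.expectation (PP f) h = (\<Sum>k<6. h k * pmf (PP f) k)"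
      by (rule integral_measure_pmf_real) (use PP_set[OF f0 f1] in auto)
    also have "\<dots> = (\<Sum>k<6. f k * h k)"
      by (rule sum.cong) (auto simp: PP_pmf[OF f0 f1])
    finally show ?thesis .
  qed
  have mu: "(\<Sum>i<m. measure_pmf.expectation ?P (\<lambda>w. h (w i))) = real m * (\<Sum>k<6. f k * h k)"
    using ex by simp
  have pos: "(\<Sum>i<m. (1 - (-1::real))^2) = 4 * real m" by simp
  have "measure_pmf.prob ?P {x \<in> space (measure_pmf ?P). \<bar>(\<Sum>i<m. h (x i)) - (\<Sum>i<m. measure_pmf.expectation ?P (\<lambda>w. h (w i)))\<bar> \<ge> \<epsilon>}
     \<le> 2 * exp (-2 * \<epsilon>^2 / (\<Sum>i<m. (1 - (-1::real))^2))"
    by (rule H.Hoeffding_ineq_abs_ge[OF e]) (use m in simp)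
  then show ?thesis unfolding mu pos by simp
qed


lemma tr_outer_quad: "trace (s ** outer u) = (\<Sum>i\<in>UNIV. cnj (u $ i) * (s *v u) $ i)"
  by (simp add: trace_def sum_2 matrix_matrix_mult_def outer_def matrix_vector_mult_def algebra_simps)

lemma qq_nonneg: "psd s \<Longrightarrow> qq s k \<ge> 0"
  unfolding qq_def FF_def tr_outer_quad by (rule psd_entries(6))

lemma qq_sum1: "density s \<Longrightarrow> (\<Sum>k<6. qq s k) = 1"
  unfolding qq_sum density_def by simp

lemma out_prob_link:
  assumes "density s"
  shows "out_prob s m ((\<lambda>_. 6), (\<lambda>_. FF), G) b
     = measure_pmf.prob (Pi_pmf {..<m} undefined (\<lambda>_. PP (qq s))) {w. G w = b}"
proof -
  have f0: "\<And>k. k < 6 \<Longrightarrow> qq s k \<ge> 0" using assms qq_nonneg by (auto simp: density_def)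
  have f1: "(\<Sum>k<6. qq s k) = 1" using qq_sum1[OF assms] .
  show ?thesis unfolding out_prob_def by (simp add: prob_PiE[OF f0 f1, of m "\<lambda>w. G w = b"] qq_def)
qed

lemma hh_bound: "hh a k \<in> {-1..1}"
  by (simp add: hh_def)

lemma hoeff_s:
  assumes "density s" "m > 0" "\<epsilon> \<ge> 0"
  shows "measure_pmf.prob (Pi_pmf {..<m} undefined (\<lambda>_. PP (qq s)))
     {w. \<epsilon> \<le> \<bar>(\<Sum>i<m. hh a (w i)) - real m * mu s a\<bar>} \<le> 2 * exp (-2 * \<epsilon>^2 / (4 * real m))"
proof -
  have f0: "\<And>k. k < 6 \<Longrightarrow> qq s k \<ge> 0" using assms qq_nonneg by (auto simp: density_def)
  have f1: "(\<Sum>k<6. qq s k) = 1" using qq_sum1[OF assms(1)] .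
  show ?thesis using hoeff[OF f0 f1 hh_bound[of a] assms(2,3)] by (simp add: mu_def)
qed

lemma dist_mu:
  assumes r: "density \<rho>" and s: "density \<sigma>"
  shows "(trace_norm (\<rho> - \<sigma>))^2 = 9 * ((mu \<rho> 0 - mu \<sigma> 0)^2 + (mu \<rho> 1 - mu \<sigma> 1)^2 + (mu \<rho> 2 - mu \<sigma> 2)^2)"
proof -
  have pr: "psd \<rho>" "trace \<rho> = 1" "psd \<sigma>" "trace \<sigma> = 1"
    using r s unfolding density_def by auto
  note er = psd_entries[OF pr(1)] and es = psd_entries[OF pr(3)]
  have t: "Re (\<rho>$1$1) + Re (\<rho>$2$2) = 1" "Re (\<sigma>$1$1) + Re (\<sigma>$2$2) = 1"
    using arg_cong[OF pr(2), of Re] arg_cong[OF pr(4), of Re] by (simp_all add: trace_def sum_2)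
  have h0: "mu \<rho> 0 - mu \<sigma> 0 = 2 * Re ((\<rho> - \<sigma>)$1$1) / 3"
    using t by (simp add: mu_vals mu_vals(2)[unfolded One_nat_def] field_simps)
  have h1: "mu \<rho> 1 - mu \<sigma> 1 = 2 * Re ((\<rho> - \<sigma>)$1$2) / 3"
    using er(3) es(3) by (simp add: mu_vals mu_vals(2)[unfolded One_nat_def] field_simps)
  have h2: "mu \<rho> 2 - mu \<sigma> 2 = - 2 * Im ((\<rho> - \<sigma>)$1$2) / 3"
    using er(3) es(3) by (simp add: mu_vals mu_vals(2)[unfolded One_nat_def] field_simps)
  show ?thesis
    unfolding trace_norm_diff[OF r s] h0 h1 h2 by (simp add: power2_eq_square field_simps)
qed

lemma exists_big:
  fixes x0 x1 x2 d :: real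
  assumes "d = 9 * (x0^2 + x1^2 + x2^2)"
  shows "\<exists>a\<in>{x0, x1, x2}. d \<le> 27 * a^2"
proof -
  consider "x1^2 \<le> x0^2 \<and> x2^2 \<le> x0^2" | "x0^2 \<le> x1^2 \<and> x2^2 \<le> x1^2" | "x0^2 \<le> x2^2 \<and> x1^2 \<le> x2^2"
    by linarith
  then show ?thesis using assms by cases auto
qed

lemma key_ineq:
  fixes A B C D l r :: real
  assumes "l \<le> 1" "1 \<le> r" "D \<le> 27 * A" "0 \<le> C"
  shows "l - (A - 2 * B + C) / 2 \<le> - D / 54 + (B + r)"
  using assms by (simp add: field_simps)

theorem theorem2:
  fixes \<rho> :: qmat and \<alpha> :: real
  assumes "density \<rho>" and "0 < \<alpha>" and "\<alpha> < 1"
  shows "\<exists>M :: nat \<Rightarrow> indep_rule.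
           (\<forall>m. is_indep_rule m (M m)) \<and>
           (\<exists>m0. \<forall>m\<ge>m0. type1_err \<rho> m (M m) \<le> \<alpha>) \<and>
           (\<forall>\<sigma>. density \<sigma> \<and> \<sigma> \<noteq> \<rho> \<longrightarrow>
              (\<exists>K::real. \<exists>m0. \<forall>m\<ge>m0.
                 type2_err \<sigma> m (M m) \<le>
                   exp (- (real m * (trace_norm (\<rho> - \<sigma>))\<^sup>2) / 54 + K * sqrt (real m))))"
proof -
  define T where "T = sqrt (2 * ln (6 / \<alpha>))"
  have lnpos: "ln (6 / \<alpha>) > 0" using assms(2,3) by simp
  have T0: "T \<ge> 0" unfolding T_def using lnpos by simp
  have T2: "T^2 = 2 * ln (6 / \<alpha>)" unfolding T_def using lnpos by simp
  define g where "g m w = (\<exists>a<3. T * sqrt (real m) \<le> \<bar>(\<Sum>i<m. hh a (w i)) - real m * mu \<rho> a\<bar>)"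
    for m :: nat and w :: "nat \<Rightarrow> nat"
  define M :: "nat \<Rightarrow> indep_rule" where "M m = ((\<lambda>_. 6), (\<lambda>_. FF), g m)" for m
  let ?P = "\<lambda>s m. Pi_pmf {..<m} undefined (\<lambda>_. PP (qq s))"
  have rule: "\<forall>m. is_indep_rule m (M m)"
    by (simp add: M_def is_indep_rule_def FF_def psd_outer FF_sum[unfolded FF_def])
  have typeI: "\<forall>m\<ge>1. type1_err \<rho> m (M m) \<le> \<alpha>"
  proof (intro allI impI)
    fix m :: nat assume m1: "m \<ge> 1"
    then have m: "m > 0" by simp
    have "type1_err \<rho> m (M m) = measure_pmf.prob (?P \<rho> m) {w. g m w = True}"
      unfolding type1_err_def M_def by (rule out_prob_link[OF assms(1)])
    also have "{w. g m w = True} = (\<Union>a\<in>{..<3::nat}. {w. T * sqrt (real m) \<le> \<bar>(\<Sum>i<m. hh a (w i)) - real m * mu \<rho> a\<bar>})"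
      by (auto simp: g_def)
    also have "measure_pmf.prob (?P \<rho> m) \<dots> \<le> (\<Sum>a<3::nat. measure_pmf.prob (?P \<rho> m) {w. T * sqrt (real m) \<le> \<bar>(\<Sum>i<m. hh a (w i)) - real m * mu \<rho> a\<bar>})"
      by (rule measure_UNION_le) auto
    also have "\<dots> \<le> (\<Sum>a<3::nat. 2 * exp (-2 * (T * sqrt (real m))^2 / (4 * real m)))"
      by (rule sum_mono, rule hoeff_s[OF assms(1) m]) (use T0 in simp)
    also have "-2 * (T * sqrt (real m))^2 / (4 * real m) = - ln (6 / \<alpha>)"
      using m by (simp add: power_mult_distrib T2)
    also have "exp (- ln (6 / \<alpha>)) = \<alpha> / 6"
      using assms(2) by (simp add: exp_minus)
    finally show "type1_err \<rho> m (M m) \<le> \<alpha>" by simp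
  qed
  have typeII: "\<exists>K::real. \<exists>m0. \<forall>m\<ge>m0.
                 type2_err \<sigma> m (M m) \<le>
                   exp (- (real m * (trace_norm (\<rho> - \<sigma>))\<^sup>2) / 54 + K * sqrt (real m))"
    if s: "density \<sigma>" for \<sigma>
  proof -
    define d where "d = trace_norm (\<rho> - \<sigma>)"
    obtain a where a3: "a < (3::nat)" and da: "d^2 \<le> 27 * (mu \<rho> a - mu \<sigma> a)^2"
    proof -
      obtain x where x: "x \<in> {mu \<rho> 0 - mu \<sigma> 0, mu \<rho> 1 - mu \<sigma> 1, mu \<rho> 2 - mu \<sigma> 2}"
        and dx: "d^2 \<le> 27 * x^2"
        using exists_big[OF dist_mu[OF assms(1) s]] unfolding d_def by blast
      from x consider "x = mu \<rho> 0 - mu \<sigma> 0" | "x = mu \<rho> 1 - mu \<sigma> 1" | "x = mu \<rho> 2 - mu \<sigma> 2"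
        by blast
      then show ?thesis
      proof cases
        case 1 then show ?thesis using that[of 0] dx by simp
      next
        case 2 then show ?thesis using that[of 1] dx by simp
      next
        case 3 then show ?thesis using that[of 2] dx by simp
      qed
    qed
    define \<delta> where "\<delta> = \<bar>mu \<rho> a - mu \<sigma> a\<bar>"
    have d2: "d^2 \<le> 27 * \<delta>^2" using da by (simp add: \<delta>_def)
    have tp: "type2_err \<sigma> m (M m) = measure_pmf.prob (?P \<sigma> m) {w. g m w = False}" for m
      unfolding type2_err_def M_def by (rule out_prob_link[OF s])
    show ?thesis
    proof (cases "\<delta> = 0")
      case True
      then have "27 * \<delta>^2 = 0" by simp
      then have "d^2 = 0" using d2 zero_le_power2[of d] by linarith
      then show ?thesis
        by (intro exI[of _ 0] exI[of _ 0]) (simp add: d_def tp measure_pmf.prob_le_1)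
    next
      case False
      then have dpos: "\<delta> > 0" by (simp add: \<delta>_def)
      show ?thesis
      proof (intro exI[of _ "\<delta> * T + 1"] exI[of _ "max 1 (nat \<lceil>(T / \<delta>)^2\<rceil>)"] allI impI)
        fix m :: nat assume mm: "max 1 (nat \<lceil>(T / \<delta>)^2\<rceil>) \<le> m"
        then have m: "m > 0" by simp
        define r where "r = sqrt (real m)"
        have r1: "r \<ge> 1" using m by (simp add: r_def)
        have rr: "r^2 = real m" by (simp add: r_def)
        have "(T / \<delta>)^2 \<le> real (nat \<lceil>(T / \<delta>)^2\<rceil>)" by (rule real_nat_ceiling_ge)
        also have "\<dots> \<le> real m"
          using order_trans[OF max.cobounded2 mm] by (simp only: of_nat_le_iff)
        finally have "(T / \<delta>)^2 \<le> real m" .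
        then have "sqrt ((T / \<delta>)^2) \<le> r" unfolding r_def by (rule real_sqrt_le_mono)
        then have "T / \<delta> \<le> r" using T0 dpos by simp
        then have Tr: "T \<le> r * \<delta>" using dpos by (simp add: field_simps)
        define \<epsilon> where "\<epsilon> = real m * \<delta> - T * r"
        have e0: "\<epsilon> \<ge> 0" unfolding \<epsilon>_def rr[symmetric] using Tr r1
          by (simp add: power2_eq_square)
        have sub: "{w. g m w = False} \<subseteq> {w. \<epsilon> \<le> \<bar>(\<Sum>i<m. hh a (w i)) - real m * mu \<sigma> a\<bar>}"
        proof
          fix w assume "w \<in> {w. g m w = False}"
          then have "\<not> (T * sqrt (real m) \<le> \<bar>(\<Sum>i<m. hh a (w i)) - real m * mu \<rho> a\<bar>)"
            using a3 unfolding g_def by blast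
          then have lt: "\<bar>(\<Sum>i<m. hh a (w i)) - real m * mu \<rho> a\<bar> < T * r"
            by (simp add: r_def not_le)
          have tri: "\<bar>A - B\<bar> \<le> \<bar>S - B\<bar> + \<bar>S - A\<bar>" for A B S :: real by arith
          have "real m * \<delta> = \<bar>real m * mu \<rho> a - real m * mu \<sigma> a\<bar>"
            by (simp add: \<delta>_def abs_mult right_diff_distrib[symmetric])
          then show "w \<in> {w. \<epsilon> \<le> \<bar>(\<Sum>i<m. hh a (w i)) - real m * mu \<sigma> a\<bar>}"
            using lt tri[of "real m * mu \<rho> a" "real m * mu \<sigma> a" "\<Sum>i<m. hh a (w i)"]
            unfolding \<epsilon>_def by simp
        qed
        have h0: "type2_err \<sigma> m (M m) \<le> measure_pmf.prob (?P \<sigma> m) {w. \<epsilon> \<le> \<bar>(\<Sum>i<m. hh a (w i)) - real m * mu \<sigma> a\<bar>}"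
          unfolding tp by (rule measure_pmf.finite_measure_mono[OF sub]) simp
        have h1: "measure_pmf.prob (?P \<sigma> m) {w. \<epsilon> \<le> \<bar>(\<Sum>i<m. hh a (w i)) - real m * mu \<sigma> a\<bar>} \<le> 2 * exp (-2 * \<epsilon>^2 / (4 * real m))"
          by (rule hoeff_s[OF s m e0])
        have epsr: "\<epsilon> = r * (r * \<delta> - T)"
          unfolding \<epsilon>_def rr[symmetric] by (simp add: power2_eq_square algebra_simps)
        have eps2: "\<epsilon>^2 = real m * (r * \<delta> - T)^2"
          unfolding epsr power_mult_distrib rr ..
        have h2a: "-2 * \<epsilon>^2 / (4 * real m) = - ((r * \<delta> - T)^2) / 2"
          unfolding eps2 using m by simp
        have h2: "2 * exp (-2 * \<epsilon>^2 / (4 * real m)) = exp (ln 2 - ((r * \<delta> - T)^2) / 2)"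
        proof -
          have "ln 2 - ((r * \<delta> - T)^2) / 2 = ln 2 + (-2 * \<epsilon>^2 / (4 * real m))"
            using h2a by linarith
          then have "exp (ln 2 - ((r * \<delta> - T)^2) / 2) = exp (ln 2) * exp (-2 * \<epsilon>^2 / (4 * real m))"
            by (simp only: exp_add)
          then show ?thesis by simp
        qed
        have h3: "exp (ln 2 - ((r * \<delta> - T)^2) / 2) \<le> exp (- (real m * d\<^sup>2) / 54 + (\<delta> * T + 1) * r)"
        proof (subst exp_le_cancel_iff)
          have l2: "ln (2::real) \<le> 1" using ln_le_minus_one[of 2] by simp
          have X: "(r * \<delta> - T)^2 = real m * \<delta>^2 - 2 * (\<delta> * T * r) + T^2"
            unfolding rr[symmetric] by (simp add: power2_eq_square algebra_simps)
          have D: "real m * d^2 \<le> 27 * (real m * \<delta>^2)"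
            using d2 mult_left_mono[OF d2, of "real m"] by simp
          have C: "T^2 \<ge> 0" by simp
          have B: "(\<delta> * T + 1) * r = \<delta> * T * r + r" by (simp add: algebra_simps)
          show "ln 2 - (r * \<delta> - T)\<^sup>2 / 2 \<le> - (real m * d\<^sup>2) / 54 + (\<delta> * T + 1) * r"
            unfolding B X by (rule key_ineq[OF l2 r1 D C])
        qed
        have "type2_err \<sigma> m (M m) \<le> exp (- (real m * d\<^sup>2) / 54 + (\<delta> * T + 1) * r)"
          using h0 h1 h2 h3 by linarith
        then show "type2_err \<sigma> m (M m) \<le> exp (- (real m * (trace_norm (\<rho> - \<sigma>))\<^sup>2) / 54 + (\<delta> * T + 1) * sqrt (real m))"
          unfolding d_def r_def .
      qed
    qed
  qed
  show ?thesis
    by (intro exI[of _ M] conjI rule exI[of _ 1] typeI allI impI typeII) auto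
qed

end
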